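(* Let $c>0$, $\Delta_1,\dots,\Delta_K\in(0,1]$ and $T\ge K$. Let $\Psi_c\ge0$ be the unique solution $x\ge0$ of \[ \sum_{i=1}^K\Big(\mathbb{I}\{x\le\ln\Delta_i^{-1}\}e^{2x}+\mathbb{I}\{x>\ln\Delta_i^{-1}\}\frac{x-\ln\Delta_i^{-1}+c/2}{c\Delta_i^2/2}\Big)=T. \] Then an optimal solution of $\mathscr{P}_c(\{\max\{\Delta_i,e^{-\Psi_c}\}\}_{i=1}^K,T)$ is given by \[ x_i=\mathbb{I}\{\Psi_c\le\ln\Delta_i^{-1}\}e^{2\Psi_c}+\mathbb{I}\{\Psi_c>\ln\Delta_i^{-1}\}\frac{\Psi_c-\ln\Delta_i^{-1}+c/2}{c\Delta_i^2/2},\quad i=1,\dots,K. \]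
   Context: For $c>0$, $T\ge0$ and positive reals $D_1,\dots,D_K$, the program $\mathscr{P}_c(\{D_i\}_{i=1}^K,T)$ is: minimize $\sum_{i=1}^K\exp(-c x_iD_i^2)$ subject to $x_1+\dots+x_K=T$, $x_i\ge0$. The left-hand side of the defining equation of $\Psi_c$ is continuous and strictly increasing in $x\ge0$, equals $K$ at $x=0$, and tends to $\infty$, so $\Psi_c$ is well defined. *)

theory Defs
  imports Complex_Main
begin

text \<open>The program P_c({D_i}_{i=1..K}, T): minimize sum_i exp(-c x_i D_i^2)
  subject to sum_i x_i = T, x_i >= 0. Indices range over {1..K}; vectors are
  functions nat => real whose values outside {1..K} are irrelevant.\<close>

definition P_objective :: "real \<Rightarrow> nat \<Rightarrow> (nat \<Rightarrow> real) \<Rightarrow> (nat \<Rightarrow> real) \<Rightarrow> real" where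
  "P_objective c K D x = (\<Sum>i=1..K. exp (- c * x i * (D i)^2))"

definition P_feasible :: "nat \<Rightarrow> real \<Rightarrow> (nat \<Rightarrow> real) \<Rightarrow> bool" where
  "P_feasible K T x \<longleftrightarrow> (\<Sum>i=1..K. x i) = T \<and> (\<forall>i\<in>{1..K}. x i \<ge> 0)"

definition P_optimal :: "real \<Rightarrow> nat \<Rightarrow> (nat \<Rightarrow> real) \<Rightarrow> real \<Rightarrow> (nat \<Rightarrow> real) \<Rightarrow> bool" where
  "P_optimal c K D T x \<longleftrightarrow> P_feasible K T x \<and>
     (\<forall>y. P_feasible K T y \<longrightarrow> P_objective c K D x \<le> P_objective c K D y)"

definition psi_lhs :: "real \<Rightarrow> nat \<Rightarrow> (nat \<Rightarrow> real) \<Rightarrow> real \<Rightarrow> real" where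
  "psi_lhs c K \<Delta> x = (\<Sum>i=1..K.
      (if x \<le> ln (1 / \<Delta> i) then exp (2 * x)
       else (x - ln (1 / \<Delta> i) + c / 2) / (c * (\<Delta> i)^2 / 2)))"

end

theory Submission
  imports Defs
begin

lemma key_i:
  fixes c \<Psi> d :: real
  assumes c: "c > 0" and d: "0 < d" "d \<le> 1"
  defines "D \<equiv> max d (exp (- \<Psi>))"
  defines "xi \<equiv> (if \<Psi> \<le> ln (1 / d) then exp (2 * \<Psi>)
                else (\<Psi> - ln (1 / d) + c / 2) / (c * d^2 / 2))"
  shows "c * D^2 * exp (- c * xi * D^2) = c * exp (- 2 * \<Psi> - c)"
proof (cases "\<Psi> \<le> ln (1 / d)")
  case True
  have "ln d \<le> - \<Psi>" using True d by (simp add: ln_div)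
  hence "d \<le> exp (- \<Psi>)" using d by (metis exp_ln exp_le_cancel_iff)
  hence DD: "D = exp (- \<Psi>)" unfolding D_def by simp
  have "D^2 = exp (- 2 * \<Psi>)" unfolding DD by (simp add: power2_eq_square flip: exp_add)
  moreover have "xi = exp (2 * \<Psi>)" using True unfolding xi_def by simp
  ultimately have "xi * D^2 = 1" by (simp flip: exp_add)
  hence "c * xi * D^2 = c" by (simp add: mult.assoc)
  thus ?thesis using \<open>D^2 = exp (- 2 * \<Psi>)\<close> by (simp flip: exp_add)
next
  case False
  have "ln d > - \<Psi>" using False d by (simp add: ln_div)
  hence "d > exp (- \<Psi>)" using d by (metis exp_ln exp_less_cancel_iff)
  hence DD: "D = d" unfolding D_def by simp
  have xi: "xi = (\<Psi> + ln d + c / 2) / (c * d^2 / 2)" using False d unfolding xi_def by (simp add: ln_div)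
  have "c * xi * D^2 = 2 * \<Psi> + 2 * ln d + c" unfolding xi DD using c d by (simp add: field_simps)
  hence "exp (- c * xi * D^2) = exp (- 2 * \<Psi> - c) * exp (- 2 * ln d)" by (simp flip: exp_add)
  moreover have "exp (- 2 * ln d) * d^2 = 1" using d
  proof -
    have "exp (- 2 * ln d) = exp (- ln d) * exp (- ln d)" by (simp flip: exp_add)
    also have "\<dots> = (1 / d) * (1 / d)" using d by (simp add: exp_minus divide_inverse)
    finally show ?thesis using d by (simp add: power2_eq_square)
  qed
  ultimately show ?thesis unfolding DD by (simp add: field_simps)
qed

theorem lemma4:
  fixes c T \<Psi> :: real and K :: nat and \<Delta> :: "nat \<Rightarrow> real"
  assumes "c > 0"
    and "\<forall>i\<in>{1..K}. 0 < \<Delta> i \<and> \<Delta> i \<le> 1"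
    and "T \<ge> real K"
    and "\<Psi> \<ge> 0"
    and "psi_lhs c K \<Delta> \<Psi> = T"
  shows "P_optimal c K (\<lambda>i. max (\<Delta> i) (exp (- \<Psi>))) T
           (\<lambda>i. if \<Psi> \<le> ln (1 / \<Delta> i) then exp (2 * \<Psi>)
                else (\<Psi> - ln (1 / \<Delta> i) + c / 2) / (c * (\<Delta> i)^2 / 2))"
proof -
  define D where "D = (\<lambda>i. max (\<Delta> i) (exp (- \<Psi>)))"
  define x where "x = (\<lambda>i. if \<Psi> \<le> ln (1 / \<Delta> i) then exp (2 * \<Psi>)
                else (\<Psi> - ln (1 / \<Delta> i) + c / 2) / (c * (\<Delta> i)^2 / 2))"
  define L where "L = c * exp (- 2 * \<Psi> - c)"
  have g: "c * (D i)^2 * exp (- c * x i * (D i)^2) = L" if "i \<in> {1..K}" for i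
    using key_i[OF assms(1), of "\<Delta> i" \<Psi>] assms(2) that unfolding D_def x_def L_def by auto
  have sx: "(\<Sum>i=1..K. x i) = T" using assms(5) unfolding psi_lhs_def x_def by simp
  have pos: "x i \<ge> 0" if "i \<in> {1..K}" for i
  proof (cases "\<Psi> \<le> ln (1 / \<Delta> i)")
    case False
    then have "\<Psi> - ln (1 / \<Delta> i) + c / 2 > 0" using assms(1) by simp
    moreover have "c * (\<Delta> i)^2 / 2 > 0" proof -
      have "\<Delta> i > 0" using assms(2) that by blast
      thus ?thesis using assms(1) by simp
    qed
    ultimately show ?thesis using False unfolding x_def by simp
  qed (simp add: x_def)
  have feas: "P_feasible K T x" unfolding P_feasible_def using sx pos by auto
  have opt: "P_objective c K D x \<le> P_objective c K D y" if "P_feasible K T y" for y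
  proof -
    have sy: "(\<Sum>i=1..K. y i) = T" using that unfolding P_feasible_def by simp
    have each: "exp (- c * x i * (D i)^2) - L * (y i - x i) \<le> exp (- c * y i * (D i)^2)"
      if "i \<in> {1..K}" for i
    proof -
      have "1 + (- c * y i * (D i)^2 - (- c * x i * (D i)^2)) \<le> exp (- c * y i * (D i)^2 - (- c * x i * (D i)^2))"
        by (rule exp_ge_add_one_self)
      hence "exp (- c * x i * (D i)^2) * (1 + (- c * y i * (D i)^2 - (- c * x i * (D i)^2)))
             \<le> exp (- c * x i * (D i)^2) * exp (- c * y i * (D i)^2 - (- c * x i * (D i)^2))"
        by (rule mult_left_mono) simp
      also have "\<dots> = exp (- c * y i * (D i)^2)" by (simp flip: exp_add)
      finally have "exp (- c * x i * (D i)^2) * (1 + (- c * y i * (D i)^2 - (- c * x i * (D i)^2)))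
             \<le> exp (- c * y i * (D i)^2)" .
      moreover have "exp (- c * x i * (D i)^2) * (1 + (- c * y i * (D i)^2 - (- c * x i * (D i)^2)))
          = exp (- c * x i * (D i)^2) - (c * (D i)^2 * exp (- c * x i * (D i)^2)) * (y i - x i)"
        by (simp add: algebra_simps)
      ultimately show ?thesis using g[OF that] by simp
    qed
    have "(\<Sum>i=1..K. exp (- c * x i * (D i)^2) - L * (y i - x i)) \<le> (\<Sum>i=1..K. exp (- c * y i * (D i)^2))"
      by (rule sum_mono) (use each in auto)
    moreover have "(\<Sum>i=1..K. exp (- c * x i * (D i)^2) - L * (y i - x i)) = (\<Sum>i=1..K. exp (- c * x i * (D i)^2))"
      using sx sy by (simp add: sum_subtractf sum_distrib_left[symmetric])
    ultimately show ?thesis unfolding P_objective_def by simp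
  qed
  show ?thesis using feas opt unfolding P_optimal_def D_def x_def by blast
qed

end
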